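(* Let $f(x)=\frac1n\sum_{i=1}^n f_i(x)$ on $\mathbb{R}^d$, where each $f_i$ is differentiable, lower bounded and $L_i$-smooth, $L_{\max}=\max_iL_i$, and assume $f$ is $\mu$-PL ($\mu>0$). Fix $\lambda\in[0,1]$ and consider deterministic Unified SAM $$x^{t+1}=x^t-\gamma\,\nabla f\!\left(x^t+\rho\left(1-\lambda+\frac{\lambda}{\|\nabla f(x^t)\|}\right)\nabla f(x^t)\right)$$ with $\rho\le\frac{1}{L_{\max}(1+2(1-\lambda)^2)}$ and $\gamma\le\frac{1-L_{\max}\rho(1+2(1-\lambda)^2)}{2L_{\max}[2L_{\max}^2\rho^2(1-\lambda)^2+1]}$. Then for all $t\ge0$ $$f(x^t)-f(x^* )\le(1-\gamma\mu)^t[f(x^0)-f(x^* )]+\frac{L_{\max}\rho(1+2\gamma L_{\max}^2\rho)\lambda^2}{\mu}.$$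
   Context: Each $f_i$ is $L_i$-smooth: $\|\nabla f_i(x)-\nabla f_i(y)\|\le L_i\|x-y\|$. The set of minimizers of $f$ is nonempty and $x^*$ is a minimizer. $f$ is $\mu$-PL if $\|\nabla f(x)\|^2\ge 2\mu(f(x)-f(x^* ))$ for all $x$. The deterministic method is the full-batch case of Unified SAM, i.e. the stochastic gradient is the exact gradient $\nabla f$. *)

theory Defs
  imports "HOL-Analysis.Analysis"
begin

end

theory Submission
  imports Defs
begin

lemma line_deriv:
  fixes F :: "'a::euclidean_space \<Rightarrow> real"
  assumes "\<And>y. GDERIV F y :> G y"
  shows "((\<lambda>s. F (x + s *\<^sub>R d)) has_real_derivative (G (x + s *\<^sub>R d) \<bullet> d)) (at s)"
proof -
  have 1: "((\<lambda>s. x + s *\<^sub>R d) has_derivative (\<lambda>h. h *\<^sub>R d)) (at s)"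
    by (auto intro!: derivative_eq_intros)
  have 2: "(F has_derivative (\<lambda>h. h \<bullet> G (x + s *\<^sub>R d))) (at (x + s *\<^sub>R d))"
    using assms unfolding gderiv_def by blast
  have "((\<lambda>s. F (x + s *\<^sub>R d)) has_derivative (\<lambda>h. (h *\<^sub>R d) \<bullet> G (x + s *\<^sub>R d))) (at s)"
    using has_derivative_compose[OF 1 2] by simp
  moreover have "(\<lambda>h. (h *\<^sub>R d) \<bullet> G (x + s *\<^sub>R d)) = (*) (G (x + s *\<^sub>R d) \<bullet> d)"
    by (auto simp: inner_commute)
  ultimately show ?thesis unfolding has_field_derivative_def by simp
qed

lemma descent:
  fixes F :: "'a::euclidean_space \<Rightarrow> real"
  assumes gd: "\<And>y. GDERIV F y :> G y" and lip: "\<And>y z. norm (G y - G z) \<le> L * norm (y - z)"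
  shows "F y \<le> F x + G x \<bullet> (y - x) + L/2 * (norm (y-x))\<^sup>2"
proof -
  define d where "d = y - x"
  define h where "h = (\<lambda>s. F (x + s *\<^sub>R d) - s * (G x \<bullet> d) - L/2 * s\<^sup>2 * (norm d)\<^sup>2)"
  have D: "(h has_real_derivative (G (x + s *\<^sub>R d) \<bullet> d - G x \<bullet> d - L * s * (norm d)\<^sup>2)) (at s)" for s
    unfolding h_def
    by (rule derivative_eq_intros line_deriv[OF gd] | simp)+
  have np: "G (x + s *\<^sub>R d) \<bullet> d - G x \<bullet> d - L * s * (norm d)\<^sup>2 \<le> 0" if "0 \<le> s" for s
  proof -
    have "G (x + s *\<^sub>R d) \<bullet> d - G x \<bullet> d = (G (x + s *\<^sub>R d) - G x) \<bullet> d" by (simp add: inner_diff_left)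
    also have "\<dots> \<le> norm (G (x + s *\<^sub>R d) - G x) * norm d" by (rule norm_cauchy_schwarz)
    also have "\<dots> \<le> (L * norm (s *\<^sub>R d)) * norm d"
      using lip[of "x + s *\<^sub>R d" x] by (intro mult_right_mono) auto
    also have "\<dots> = L * s * (norm d)\<^sup>2" using that by (simp add: power2_eq_square)
    finally show ?thesis by simp
  qed
  have "h 1 \<le> h 0"
    apply (rule DERIV_nonpos_imp_nonincreasing[of 0 1])
    subgoal by simp
    subgoal for s using D[of s] np[of s] by (intro exI[of _ "G (x + s *\<^sub>R d) \<bullet> d - G x \<bullet> d - L * s * (norm d)\<^sup>2"] conjI) simp_all
    done
  then show ?thesis unfolding h_def d_def by (simp add: algebra_simps)
qed

lemma arith_step:
  fixes a ip ne L gamma rho lam :: real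
  assumes a: "a \<ge> 0" and Lp: "L > 0" and gp: "gamma > 0" and rp: "rho > 0"
    and l0: "0 \<le> lam" and l1: "lam \<le> 1"
    and cond: "2 * L * gamma * (2 * L\<^sup>2 * rho\<^sup>2 * (1 - lam)\<^sup>2 + 1) \<le> 1 - L * rho * (1 + 2 * (1 - lam)\<^sup>2)"
    and s: "s = rho * ((1 - lam) * a + lam)"
    and ip: "ip \<ge> - (a * (L * s))"
    and ne: "ne \<le> 2 * a\<^sup>2 + 2 * (L * s)\<^sup>2"
  shows "- gamma * (a\<^sup>2 + ip) + L * gamma\<^sup>2 / 2 * ne
         \<le> - gamma / 2 * a\<^sup>2 + gamma * (L * rho * (1 + 2 * gamma * L\<^sup>2 * rho) * lam\<^sup>2)"
proof -
  have s0: "s \<ge> 0" using s a l0 l1 rp by simp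
  have h1: "- gamma * (a\<^sup>2 + ip) \<le> - gamma * a\<^sup>2 + gamma * L * (a * s)"
  proof -
    have "gamma * (- (a * (L * s))) \<le> gamma * ip" using ip gp by (intro mult_left_mono) auto
    then show ?thesis by (simp add: algebra_simps)
  qed
  have h2: "L * gamma\<^sup>2 / 2 * ne \<le> L * gamma\<^sup>2 * (a\<^sup>2 + L\<^sup>2 * s\<^sup>2)"
  proof -
    have "L * gamma\<^sup>2 / 2 * ne \<le> L * gamma\<^sup>2 / 2 * (2 * a\<^sup>2 + 2 * (L * s)\<^sup>2)"
      using ne Lp gp by (intro mult_left_mono) auto
    then show ?thesis by (simp add: algebra_simps power_mult_distrib)
  qed
  have h3: "a * s \<le> rho * (1 - lam) * a\<^sup>2 + rho * (a\<^sup>2 / 4 + lam\<^sup>2)"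
  proof -
    have "lam * a \<le> a\<^sup>2 / 4 + lam\<^sup>2" using sum_squares_ge_zero[of "a/2 - lam" 0]
      by (simp add: power2_eq_square algebra_simps)
    then have "rho * (lam * a) \<le> rho * (a\<^sup>2 / 4 + lam\<^sup>2)" using rp by (intro mult_left_mono) auto
    then show ?thesis unfolding s by (simp add: algebra_simps power2_eq_square)
  qed
  have h4: "s\<^sup>2 \<le> 2 * rho\<^sup>2 * (1 - lam)\<^sup>2 * a\<^sup>2 + 2 * rho\<^sup>2 * lam\<^sup>2"
  proof -
    have "((1 - lam) * a + lam)\<^sup>2 \<le> 2 * ((1 - lam) * a)\<^sup>2 + 2 * lam\<^sup>2"
      using sum_squares_ge_zero[of "(1 - lam) * a - lam" 0] by (simp add: power2_eq_square algebra_simps)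
    then have "rho\<^sup>2 * ((1 - lam) * a + lam)\<^sup>2 \<le> rho\<^sup>2 * (2 * ((1 - lam) * a)\<^sup>2 + 2 * lam\<^sup>2)"
      by (intro mult_left_mono) auto
    moreover have "s\<^sup>2 = rho\<^sup>2 * ((1 - lam) * a + lam)\<^sup>2" unfolding s by (simp add: power_mult_distrib)
    ultimately show ?thesis by (simp add: power_mult_distrib distrib_left mult_ac)
  qed
  have h3': "gamma * L * (a * s) \<le> gamma * L * (rho * (1 - lam) * a\<^sup>2 + rho * (a\<^sup>2 / 4 + lam\<^sup>2))"
    using h3 gp Lp by (intro mult_left_mono) auto
  have h4': "L * gamma\<^sup>2 * L\<^sup>2 * s\<^sup>2 \<le> L * gamma\<^sup>2 * L\<^sup>2 * (2 * rho\<^sup>2 * (1 - lam)\<^sup>2 * a\<^sup>2 + 2 * rho\<^sup>2 * lam\<^sup>2)"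
    using h4 gp Lp by (intro mult_left_mono) auto
  have br: "L * rho * (1 - lam) + L * rho / 4 + L * gamma + 2 * L^3 * gamma * rho\<^sup>2 * (1 - lam)\<^sup>2 \<le> 1/2"
  proof -
    have "L * rho * (1 - lam) + L * rho / 4 \<le> L * rho / 2 + L * rho * (1 - lam)\<^sup>2"
    proof -
      have "(1 - lam) + 1/4 \<le> 1/2 + (1 - lam)\<^sup>2"
        using sum_squares_ge_zero[of "(1 - lam) - 1/2" 0] by (simp add: power2_eq_square algebra_simps)
      then have "(L * rho) * ((1 - lam) + 1/4) \<le> (L * rho) * (1/2 + (1 - lam)\<^sup>2)"
        using Lp rp by (intro mult_left_mono) auto
      then show ?thesis by (simp add: algebra_simps)
    qed
    moreover have "2 * (L * gamma + 2 * L^3 * gamma * rho\<^sup>2 * (1 - lam)\<^sup>2) \<le> 1 - L * rho * (1 + 2 * (1 - lam)\<^sup>2)"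
      using cond by (simp add: algebra_simps power2_eq_square power3_eq_cube)
    ultimately show ?thesis by (simp add: algebra_simps)
  qed
  have br': "gamma * a\<^sup>2 * (L * rho * (1 - lam) + L * rho / 4 + L * gamma + 2 * L^3 * gamma * rho\<^sup>2 * (1 - lam)\<^sup>2) \<le> gamma * a\<^sup>2 * (1/2)"
    using br gp by (intro mult_left_mono) auto
  show ?thesis using h1 h2 h3' h4' br'
    by (simp add: algebra_simps power2_eq_square power3_eq_cube)
qed


theorem corollary3p4:
  fixes f :: "nat \<Rightarrow> 'a::euclidean_space \<Rightarrow> real"
    and g :: "nat \<Rightarrow> 'a \<Rightarrow> 'a"
    and L :: "nat \<Rightarrow> real"
    and n :: nat
    and mu lam rho gamma :: real
    and xstar :: 'a
    and x :: "nat \<Rightarrow> 'a"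
  defines "F \<equiv> (\<lambda>y. (\<Sum>i<n. f i y) / real n)"
    and "G \<equiv> (\<lambda>y. (1 / real n) *\<^sub>R (\<Sum>i<n. g i y))"
    and "Lmax \<equiv> Max (L ` {..<n})"
  assumes n_pos: "n \<ge> 1"
    and grad: "\<And>i y. i < n \<Longrightarrow> GDERIV (f i) y :> g i y"
    and lower_bdd: "\<And>i. i < n \<Longrightarrow> bdd_below (range (f i))"
    and smooth: "\<And>i y z. i < n \<Longrightarrow> norm (g i y - g i z) \<le> L i * norm (y - z)"
    and minimizer: "\<And>y. F xstar \<le> F y"
    and mu_pos: "mu > 0"
    and PL: "\<And>y. (norm (G y))\<^sup>2 \<ge> 2 * mu * (F y - F xstar)"
    and lam: "0 \<le> lam" "lam \<le> 1"
    and rho_pos: "rho > 0"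
    and rho_le: "rho \<le> 1 / (Lmax * (1 + 2 * (1 - lam)\<^sup>2))"
    and gamma_pos: "gamma > 0"
    and gamma_le: "gamma \<le> (1 - Lmax * rho * (1 + 2 * (1 - lam)\<^sup>2))
                      / (2 * Lmax * (2 * Lmax\<^sup>2 * rho\<^sup>2 * (1 - lam)\<^sup>2 + 1))"
    and iter: "\<And>t. x (Suc t) = x t - gamma *\<^sub>R
                 G (x t + (rho * (1 - lam + lam / norm (G (x t)))) *\<^sub>R G (x t))"
  shows "F (x t) - F xstar \<le> (1 - gamma * mu) ^ t * (F (x 0) - F xstar)
           + Lmax * rho * (1 + 2 * gamma * Lmax\<^sup>2 * rho) * lam\<^sup>2 / mu"
proof -
  have fin: "finite (L ` {..<n})" by simp
  have ne: "L ` {..<n} \<noteq> {}" using n_pos by (auto simp: lessThan_empty_iff)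
  have Lle: "L i \<le> Lmax" if "i < n" for i
    unfolding Lmax_def using that by (intro Max_ge) auto
  have npos: "real n > 0" using n_pos by simp
  have Lpos: "Lmax > 0"
  proof (rule ccontr)
    assume "\<not> Lmax > 0"
    then have "Lmax * (1 + 2 * (1 - lam)\<^sup>2) \<le> 0"
      by (intro mult_nonpos_nonneg) auto
    then have "1 / (Lmax * (1 + 2 * (1 - lam)\<^sup>2)) \<le> 0" by (simp add: divide_nonpos_nonneg)
    then show False using rho_le rho_pos by linarith
  qed
  have gradF: "GDERIV F y :> G y" for y
  proof -
    have "((\<lambda>y. \<Sum>i<n. f i y) has_derivative (\<lambda>h. \<Sum>i<n. h \<bullet> g i y)) (at y)"
      using grad unfolding gderiv_def by (intro has_derivative_sum) auto
    from has_derivative_mult_left[OF this, of "inverse (real n)"]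
    have "((\<lambda>y. (\<Sum>i<n. f i y) / real n) has_derivative (\<lambda>h. (\<Sum>i<n. h \<bullet> g i y) / real n)) (at y)"
      by (simp add: divide_inverse)
    moreover have "(\<lambda>h. (\<Sum>i<n. h \<bullet> g i y) / real n) = (\<lambda>h. h \<bullet> G y)"
      unfolding G_def by (auto simp: inner_sum_right)
    ultimately show ?thesis unfolding gderiv_def F_def by simp
  qed
  have lipG: "norm (G y - G z) \<le> Lmax * norm (y - z)" for y z
  proof -
    have "G y - G z = (1 / real n) *\<^sub>R (\<Sum>i<n. g i y - g i z)"
      unfolding G_def by (simp add: sum_subtractf scaleR_diff_right)
    then have "norm (G y - G z) = (1 / real n) * norm (\<Sum>i<n. g i y - g i z)" by simp
    also have "\<dots> \<le> (1 / real n) * (\<Sum>i<n. norm (g i y - g i z))"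
      by (intro mult_left_mono norm_sum) auto
    also have "\<dots> \<le> (1 / real n) * (\<Sum>i<n. Lmax * norm (y - z))"
      using smooth Lle by (intro mult_left_mono sum_mono order_trans[OF smooth] mult_right_mono) auto
    also have "\<dots> = Lmax * norm (y - z)" using npos by simp
    finally show ?thesis .
  qed
  note desc = descent[OF gradF lipG]
  define K where "K = Lmax * rho * (1 + 2 * gamma * Lmax\<^sup>2 * rho) * lam\<^sup>2"
  have K0: "K \<ge> 0" unfolding K_def using Lpos rho_pos gamma_pos by simp
  have cond: "2 * Lmax * gamma * (2 * Lmax\<^sup>2 * rho\<^sup>2 * (1 - lam)\<^sup>2 + 1) \<le> 1 - Lmax * rho * (1 + 2 * (1 - lam)\<^sup>2)"
  proof -
    have "0 < 2 * Lmax * (2 * Lmax\<^sup>2 * rho\<^sup>2 * (1 - lam)\<^sup>2 + 1)" using Lpos by (intro mult_pos_pos) (auto intro: add_nonneg_pos)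
    then show ?thesis using gamma_le by (simp add: pos_le_divide_eq mult_ac)
  qed
  have step: "F (x (Suc t)) - F xstar \<le> F (x t) - F xstar - gamma / 2 * (norm (G (x t)))\<^sup>2 + gamma * K" for t
  proof -
    define gg where "gg = G (x t)"
    define a where "a = norm gg"
    define r where "r = rho * (1 - lam + lam / a)"
    define e where "e = G (x t + r *\<^sub>R gg) - gg"
    define s where "s = rho * ((1 - lam) * a + lam)"
    have a0: "a \<ge> 0" unfolding a_def by simp
    have ra: "norm (r *\<^sub>R gg) \<le> s"
    proof (cases "a = 0")
      case True
      then show ?thesis unfolding s_def using rho_pos lam a_def by simp
    next
      case False
      then have "a > 0" using a0 by simp
      then have "r \<ge> 0" unfolding r_def using rho_pos lam by simp
      then have "norm (r *\<^sub>R gg) = r * a" unfolding a_def by simp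
      also have "\<dots> = s" unfolding r_def s_def using \<open>a > 0\<close> by (simp add: field_simps)
      finally show ?thesis by simp
    qed
    have en: "norm e \<le> Lmax * s"
    proof -
      have "norm e \<le> Lmax * norm (r *\<^sub>R gg)" unfolding e_def gg_def using lipG[of "x t + r *\<^sub>R G (x t)" "x t"] by simp
      also have "\<dots> \<le> Lmax * s" using ra Lpos by (intro mult_left_mono) auto
      finally show ?thesis .
    qed
    have xs: "x (Suc t) = x t - gamma *\<^sub>R (gg + e)"
      unfolding iter e_def gg_def r_def a_def by simp
    have d1: "F (x (Suc t)) \<le> F (x t) + gg \<bullet> (- (gamma *\<^sub>R (gg + e))) + Lmax / 2 * (norm (gamma *\<^sub>R (gg + e)))\<^sup>2"
      using desc[of "x (Suc t)" "x t"] unfolding xs gg_def by simp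
    have d2: "gg \<bullet> (- (gamma *\<^sub>R (gg + e))) = - gamma * (a\<^sup>2 + gg \<bullet> e)"
      unfolding a_def by (simp add: inner_add_right power2_norm_eq_inner algebra_simps)
    have d3: "(norm (gamma *\<^sub>R (gg + e)))\<^sup>2 = gamma\<^sup>2 * (norm (gg + e))\<^sup>2"
      using gamma_pos by (simp add: power_mult_distrib)
    have ip: "gg \<bullet> e \<ge> - (a * (Lmax * s))"
    proof -
      have "\<bar>gg \<bullet> e\<bar> \<le> a * norm e" unfolding a_def by (rule Cauchy_Schwarz_ineq2)
      also have "\<dots> \<le> a * (Lmax * s)" using en a0 by (intro mult_left_mono) auto
      finally show ?thesis by linarith
    qed
    have nn: "(norm (gg + e))\<^sup>2 \<le> 2 * a\<^sup>2 + 2 * (Lmax * s)\<^sup>2"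
    proof -
      have "norm (gg + e) \<le> a + Lmax * s" unfolding a_def using norm_triangle_ineq[of gg e] en by linarith
      then have "(norm (gg + e))\<^sup>2 \<le> (a + Lmax * s)\<^sup>2" by (intro power_mono) auto
      also have "\<dots> \<le> 2 * a\<^sup>2 + 2 * (Lmax * s)\<^sup>2"
        using sum_squares_ge_zero[of "a - Lmax * s" 0] by (simp add: power2_eq_square algebra_simps)
      finally show ?thesis .
    qed
    have ar: "- gamma * (a\<^sup>2 + gg \<bullet> e) + Lmax * gamma\<^sup>2 / 2 * (norm (gg + e))\<^sup>2
         \<le> - gamma / 2 * a\<^sup>2 + gamma * K"
      unfolding K_def
      by (rule arith_step[OF a0 Lpos gamma_pos rho_pos lam cond s_def ip nn])
    have "F (x (Suc t)) \<le> F (x t) + (- gamma * (a\<^sup>2 + gg \<bullet> e) + Lmax * gamma\<^sup>2 / 2 * (norm (gg + e))\<^sup>2)"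
      using d1 unfolding d2 d3 by simp
    moreover have "gamma / 2 * a\<^sup>2 = gamma / 2 * (norm (G (x t)))\<^sup>2" unfolding a_def gg_def by simp
    ultimately show ?thesis using ar by linarith
  qed
  define q where "q = 1 - gamma * mu"
  show ?thesis
  proof (cases "\<forall>y. F y \<le> F xstar")
    case True
    then have "F (x t) - F xstar = 0" "F (x 0) - F xstar = 0" using minimizer by (auto intro: antisym)
    then show ?thesis using K0 mu_pos unfolding K_def[symmetric] by simp
  next
    case False
    then obtain y0 where y0: "F y0 > F xstar" by (auto simp: not_le)
    have mule: "mu \<le> Lmax"
    proof -
      define a where "a = norm (G y0)"
      have nsq: "norm (G y0) * norm (G y0) = G y0 \<bullet> G y0" by (metis power2_norm_eq_inner power2_eq_square)
      have "F xstar \<le> F (y0 - (1 / Lmax) *\<^sub>R G y0)" by (rule minimizer)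
      also have "\<dots> \<le> F y0 + G y0 \<bullet> (- ((1 / Lmax) *\<^sub>R G y0)) + Lmax / 2 * (norm ((1 / Lmax) *\<^sub>R G y0))\<^sup>2"
        using desc[of "y0 - (1 / Lmax) *\<^sub>R G y0" y0] by simp
      also have "\<dots> = F y0 - a\<^sup>2 / (2 * Lmax)"
        unfolding a_def using Lpos nsq by (simp add: power2_norm_eq_inner power_mult_distrib field_simps power2_eq_square)
      finally have "a\<^sup>2 \<le> 2 * Lmax * (F y0 - F xstar)" using Lpos by (simp add: field_simps)
      moreover have "2 * mu * (F y0 - F xstar) \<le> a\<^sup>2" unfolding a_def by (rule PL)
      ultimately have "mu * (F y0 - F xstar) \<le> Lmax * (F y0 - F xstar)" by simp
      then show ?thesis using y0 by simp
    qed
    have "2 * Lmax * gamma * 1 \<le> 2 * Lmax * gamma * (2 * Lmax\<^sup>2 * rho\<^sup>2 * (1 - lam)\<^sup>2 + 1)"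
      using Lpos gamma_pos by (intro mult_left_mono) auto
    also have "\<dots> \<le> 1" using cond Lpos rho_pos by (smt (verit) mult_nonneg_nonneg zero_le_power2)
    finally have "gamma * Lmax \<le> 1/2" by (simp add: mult_ac)
    moreover have "gamma * mu \<le> gamma * Lmax" using mule gamma_pos by simp
    ultimately have q0: "q \<ge> 0" unfolding q_def by simp
    have step': "F (x (Suc t)) - F xstar \<le> q * (F (x t) - F xstar) + gamma * K" for t
    proof -
      have "2 * mu * (F (x t) - F xstar) \<le> (norm (G (x t)))\<^sup>2" by (rule PL)
      then have "gamma / 2 * (2 * mu * (F (x t) - F xstar)) \<le> gamma / 2 * (norm (G (x t)))\<^sup>2"
        using gamma_pos by (intro mult_left_mono) auto
      then show ?thesis using step[of t] unfolding q_def by (simp add: algebra_simps)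
    qed
    have "F (x t) - F xstar \<le> q ^ t * (F (x 0) - F xstar) + K / mu"
    proof (induction t)
      case 0
      then show ?case using K0 mu_pos by simp
    next
      case (Suc t)
      have "F (x (Suc t)) - F xstar \<le> q * (F (x t) - F xstar) + gamma * K" by (rule step')
      also have "\<dots> \<le> q * (q ^ t * (F (x 0) - F xstar) + K / mu) + gamma * K"
        using Suc q0 by (intro add_right_mono mult_left_mono) auto
      also have "\<dots> = q ^ Suc t * (F (x 0) - F xstar) + K / mu"
        unfolding q_def using mu_pos by (simp add: field_simps)
      finally show ?case .
    qed
    then show ?thesis unfolding q_def K_def .
  qed
qed

end
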